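(* Let $W_\Gamma$ be a graph product on a finite graph $\Gamma=(V,E)$ with every vertex group primary or infinite cyclic. Let $M,N$ be two $\sim_\tau$-equivalence classes such that $W_{\Gamma_N}$ is not a free group of rank $k\ge 2$. If $N\cap L_M\ne\emptyset$, then $N\subset L_M$.
   Context: Graph: $\Gamma=(V,E)$, $V$ non-empty finite, $E$ a set of 2-element subsets; $lk(v)=\{x:\{v,x\}\in E\}$, $st(v)=lk(v)\cup\{v\}$; $W_{\Gamma_N}$ is the subgroup generated by the vertex groups $G_v$, $v\in N$. A group is primary if cyclic of order $p^k$, $p$ prime, $k\ge1$. Relation $\le_\tau$ on $V$: $v\le_\tau v$; for $v\neq w$, $v\le_\tau w$ iff either (a) $|G_v|=\infty$ and $lk(v)\subset st(w)$, or (b) $|G_v|=p^k$, $|G_w|=p^\ell$ for the same prime $p$ and $st(v)\subset st(w)$; $v\sim_\tau w$ iff $v\le_\tau w$ and $w\le_\tau v$. For $M\subset V$, $L_M=V\setminus\bigcup_{w\in M}st(w)$. *)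

theory Defs
  imports "HOL-Algebra.Algebra"
begin

definition simple_graph :: "'v set \<Rightarrow> 'v set set \<Rightarrow> bool" where
  "simple_graph V E \<longleftrightarrow> finite V \<and> V \<noteq> {} \<and>
     (\<forall>e\<in>E. e \<subseteq> V \<and> card e = 2)"

definition lk :: "'v set set \<Rightarrow> 'v \<Rightarrow> 'v set" where
  "lk E v = {x. {v, x} \<in> E}"

definition st :: "'v set set \<Rightarrow> 'v \<Rightarrow> 'v set" where
  "st E v = lk E v \<union> {v}"

section \<open>Vertex groups (cyclic, described by their order; 0 = infinite)\<close>

definition primary_order :: "nat \<Rightarrow> bool" where
  "primary_order n \<longleftrightarrow> (\<exists>p k. Factorial_Ring.prime p \<and> k \<ge> 1 \<and> n = p ^ k)"

text \<open>Words are lists of pairs (v, a), standing for the a-th power of the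
  generator of the cyclic vertex group G_v (order ord v, or infinite if ord v = 0).\<close>

inductive gp_step :: "('v \<Rightarrow> nat) \<Rightarrow> 'v set set \<Rightarrow> ('v \<times> int) list \<Rightarrow> ('v \<times> int) list \<Rightarrow> bool"
  for ord :: "'v \<Rightarrow> nat" and E :: "'v set set" where
  merge: "gp_step ord E [(v, a), (v, b)] [(v, a + b)]"
| zero: "gp_step ord E [(v, 0)] []"
| order: "gp_step ord E [(v, int (ord v))] []"
| comm: "{v, w} \<in> E \<Longrightarrow> gp_step ord E [(v, a), (w, b)] [(w, b), (v, a)]"

definition gp_words :: "'v set \<Rightarrow> ('v \<times> int) list set" where
  "gp_words V = {xs. set (map fst xs) \<subseteq> V}"

definition gp_onestep :: "'v set \<Rightarrow> ('v \<Rightarrow> nat) \<Rightarrow> 'v set set \<Rightarrow> (('v \<times> int) list \<times> ('v \<times> int) list) set" where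
  "gp_onestep V ord E =
     {(xs @ l @ ys, xs @ r @ ys) | xs l r ys. gp_step ord E l r \<and>
        xs @ l @ ys \<in> gp_words V \<and> xs @ r @ ys \<in> gp_words V}"

definition gp_rel :: "'v set \<Rightarrow> ('v \<Rightarrow> nat) \<Rightarrow> 'v set set \<Rightarrow> (('v \<times> int) list \<times> ('v \<times> int) list) set" where
  "gp_rel V ord E = (gp_onestep V ord E \<union> (gp_onestep V ord E)\<inverse>)\<^sup>*"

definition graph_product :: "'v set \<Rightarrow> ('v \<Rightarrow> nat) \<Rightarrow> 'v set set \<Rightarrow> ('v \<times> int) list set monoid" where
  "graph_product V ord E =
     \<lparr>carrier = gp_words V // gp_rel V ord E,
      monoid.mult = (\<lambda>A B. gp_rel V ord E `` {(SOME x. x \<in> A) @ (SOME y. y \<in> B)}),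
      one = gp_rel V ord E `` {[]}\<rparr>"

definition vertex_elem :: "'v set \<Rightarrow> ('v \<Rightarrow> nat) \<Rightarrow> 'v set set \<Rightarrow> 'v \<Rightarrow> int \<Rightarrow> ('v \<times> int) list set" where
  "vertex_elem V ord E v a = gp_rel V ord E `` {[(v, a)]}"

definition W_sub :: "'v set \<Rightarrow> ('v \<Rightarrow> nat) \<Rightarrow> 'v set set \<Rightarrow> 'v set \<Rightarrow> ('v \<times> int) list set set" where
  "W_sub V ord E N = generate (graph_product V ord E) {vertex_elem V ord E v a | v a. v \<in> N}"

definition word_prod :: "('a, 'b) monoid_scheme \<Rightarrow> ('a \<times> bool) list \<Rightarrow> 'a" where
  "word_prod G ws = foldr (\<lambda>(b, e) acc. (if e then b else inv\<^bsub>G\<^esub> b) \<otimes>\<^bsub>G\<^esub> acc) ws \<one>\<^bsub>G\<^esub>"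

definition freely_reduced :: "('a \<times> bool) list \<Rightarrow> bool" where
  "freely_reduced ws \<longleftrightarrow>
     (\<forall>i. Suc i < length ws \<longrightarrow> \<not> (fst (ws ! i) = fst (ws ! Suc i) \<and> snd (ws ! i) \<noteq> snd (ws ! Suc i)))"

definition free_basis :: "('a, 'b) monoid_scheme \<Rightarrow> 'a set \<Rightarrow> 'a set \<Rightarrow> bool" where
  "free_basis G H B \<longleftrightarrow> B \<subseteq> H \<and> generate G B = H \<and>
     (\<forall>ws. ws \<noteq> [] \<and> set (map fst ws) \<subseteq> B \<and> freely_reduced ws \<longrightarrow> word_prod G ws \<noteq> \<one>\<^bsub>G\<^esub>)"

definition free_of_rank_ge2 :: "('a, 'b) monoid_scheme \<Rightarrow> 'a set \<Rightarrow> bool" where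
  "free_of_rank_ge2 G H \<longleftrightarrow> (\<exists>B. free_basis G H B \<and> (infinite B \<or> card B \<ge> 2))"

definition tau_le :: "('v \<Rightarrow> nat) \<Rightarrow> 'v set set \<Rightarrow> 'v \<Rightarrow> 'v \<Rightarrow> bool" where
  "tau_le ord E v w \<longleftrightarrow> v = w \<or>
     (v \<noteq> w \<and>
       ((ord v = 0 \<and> lk E v \<subseteq> st E w) \<or>
        (\<exists>p k l. Factorial_Ring.prime p \<and> k \<ge> 1 \<and> l \<ge> 1 \<and> ord v = p ^ k \<and> ord w = p ^ l \<and> st E v \<subseteq> st E w)))"

definition tau_equiv :: "('v \<Rightarrow> nat) \<Rightarrow> 'v set set \<Rightarrow> 'v \<Rightarrow> 'v \<Rightarrow> bool" where
  "tau_equiv ord E v w \<longleftrightarrow> tau_le ord E v w \<and> tau_le ord E w v"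

definition tau_class :: "'v set \<Rightarrow> ('v \<Rightarrow> nat) \<Rightarrow> 'v set set \<Rightarrow> 'v set \<Rightarrow> bool" where
  "tau_class V ord E M \<longleftrightarrow> (\<exists>v\<in>V. M = {w\<in>V. tau_equiv ord E v w})"

definition L_set :: "'v set \<Rightarrow> 'v set set \<Rightarrow> 'v set \<Rightarrow> 'v set" where
  "L_set V E M = V - (\<Union>w\<in>M. st E w)"

end

theory Submission
  imports Defs
begin


lemma words_append[simp]: "xs @ ys \<in> gp_words V \<longleftrightarrow> xs \<in> gp_words V \<and> ys \<in> gp_words V"
  by (auto simp: gp_words_def)

lemma words_Cons[simp]: "x # ys \<in> gp_words V \<longleftrightarrow> fst x \<in> V \<and> ys \<in> gp_words V"
  by (auto simp: gp_words_def)

lemma words_Nil[simp]: "[] \<in> gp_words V"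
  by (auto simp: gp_words_def)

lemma onestep_words: "(a,b) \<in> gp_onestep V ord E \<Longrightarrow> a \<in> gp_words V \<and> b \<in> gp_words V"
  unfolding gp_onestep_def by auto

lemma R_words: "(a,b) \<in> gp_rel V ord E \<Longrightarrow> a \<in> gp_words V \<Longrightarrow> b \<in> gp_words V"
  unfolding gp_rel_def
  by (induction rule: rtrancl_induct) (auto dest: onestep_words)

lemma R_sym: "(a,b) \<in> gp_rel V ord E \<Longrightarrow> (b,a) \<in> gp_rel V ord E"
proof -
  assume "(a,b) \<in> gp_rel V ord E"
  then have "(b,a) \<in> ((gp_onestep V ord E \<union> (gp_onestep V ord E)\<inverse>)\<inverse>)\<^sup>*"
    unfolding gp_rel_def by (simp add: rtrancl_converse)
  moreover have "(gp_onestep V ord E \<union> (gp_onestep V ord E)\<inverse>)\<inverse> = gp_onestep V ord E \<union> (gp_onestep V ord E)\<inverse>"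
    by auto
  ultimately show ?thesis unfolding gp_rel_def by simp
qed

lemma R_trans: "(a,b) \<in> gp_rel V ord E \<Longrightarrow> (b,c) \<in> gp_rel V ord E \<Longrightarrow> (a,c) \<in> gp_rel V ord E"
  unfolding gp_rel_def by (rule rtrancl_trans)

lemma R_refl[simp]: "(a,a) \<in> gp_rel V ord E"
  unfolding gp_rel_def by simp

lemma onestep_ctx: "(a,b) \<in> gp_onestep V ord E \<Longrightarrow> c \<in> gp_words V \<Longrightarrow> d \<in> gp_words V
   \<Longrightarrow> (c@a@d, c@b@d) \<in> gp_onestep V ord E"
  unfolding gp_onestep_def
  apply clarsimp
  subgoal for xs l r ys
    apply (rule exI[of _ "c@xs"], rule exI[of _ l], rule exI[of _ r], rule exI[of _ "ys@d"])
    by auto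
  done

lemma R_ctx: "(a,b) \<in> gp_rel V ord E \<Longrightarrow> c \<in> gp_words V \<Longrightarrow> d \<in> gp_words V
   \<Longrightarrow> (c@a@d, c@b@d) \<in> gp_rel V ord E"
  unfolding gp_rel_def
proof (induction rule: rtrancl_induct)
  case base then show ?case by simp
next
  case (step y z)
  from step.hyps(2) have "(c@y@d, c@z@d) \<in> gp_onestep V ord E \<union> (gp_onestep V ord E)\<inverse>"
    using onestep_ctx[OF _ step.prems] by auto
  with step.IH step.prems show ?case by (meson rtrancl.rtrancl_into_rtrancl)
qed

lemma R_cong: "(a,a') \<in> gp_rel V ord E \<Longrightarrow> (b,b') \<in> gp_rel V ord E \<Longrightarrow> a \<in> gp_words V \<Longrightarrow> b \<in> gp_words V
  \<Longrightarrow> (a@b, a'@b') \<in> gp_rel V ord E"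
proof -
  assume h: "(a,a') \<in> gp_rel V ord E" "(b,b') \<in> gp_rel V ord E" "a \<in> gp_words V" "b \<in> gp_words V"
  have "a' \<in> gp_words V" using h R_words by blast
  have "([]@a@b, []@a'@b) \<in> gp_rel V ord E" using R_ctx[OF h(1) words_Nil h(4)] by simp
  moreover have "(a'@b@[], a'@b'@[]) \<in> gp_rel V ord E" using R_ctx[OF h(2) \<open>a' \<in> _\<close> words_Nil] by simp
  ultimately show ?thesis using R_trans by fastforce
qed

lemma class_eq: "a \<in> gp_words V \<Longrightarrow> gp_rel V ord E `` {a} = gp_rel V ord E `` {b} \<longleftrightarrow> (a,b) \<in> gp_rel V ord E"
  by (auto intro: R_trans R_sym)

lemma carrier_gp: "A \<in> carrier (graph_product V ord E) \<longleftrightarrow> (\<exists>x\<in>gp_words V. A = gp_rel V ord E `` {x})"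
  unfolding graph_product_def quotient_def by auto

lemma mult_gp: "a \<in> gp_words V \<Longrightarrow> b \<in> gp_words V \<Longrightarrow>
  gp_rel V ord E `` {a} \<otimes>\<^bsub>graph_product V ord E\<^esub> gp_rel V ord E `` {b} = gp_rel V ord E `` {a@b}"
proof -
  assume a: "a \<in> gp_words V" and b: "b \<in> gp_words V"
  let ?R = "gp_rel V ord E"
  have ea: "(SOME x. x \<in> ?R``{a}) \<in> ?R``{a}" by (rule someI[of _ a]) simp
  have eb: "(SOME x. x \<in> ?R``{b}) \<in> ?R``{b}" by (rule someI[of _ b]) simp
  have "(a@b, (SOME x. x \<in> ?R``{a}) @ (SOME x. x \<in> ?R``{b})) \<in> ?R"
    using R_cong ea eb a b by blast
  then have "?R``{(SOME x. x \<in> ?R``{a}) @ (SOME x. x \<in> ?R``{b})} = ?R``{a@b}"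
    using class_eq[of "a@b" V ord E] a b by (metis words_append)
  then show ?thesis unfolding graph_product_def by simp
qed

lemma one_gp: "\<one>\<^bsub>graph_product V ord E\<^esub> = gp_rel V ord E `` {[]}"
  by (simp add: graph_product_def)

definition invw :: "('v \<times> int) list \<Rightarrow> ('v \<times> int) list" where
  "invw xs = rev (map (\<lambda>(v,a). (v,-a)) xs)"

lemma invw_words: "xs \<in> gp_words V \<Longrightarrow> invw xs \<in> gp_words V"
  by (auto simp: invw_def gp_words_def)

lemma step_R: "gp_step ord E l r \<Longrightarrow> c@l@d \<in> gp_words V \<Longrightarrow> c@r@d \<in> gp_words V
  \<Longrightarrow> (c@l@d, c@r@d) \<in> gp_rel V ord E"
  unfolding gp_rel_def gp_onestep_def by blast

lemma pair_cancel: "v \<in> V \<Longrightarrow> c \<in> gp_words V \<Longrightarrow> d \<in> gp_words V \<Longrightarrow>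
  (c@[(v,-a),(v,a)]@d, c@d) \<in> gp_rel V ord E"
proof -
  assume h: "v \<in> V" "c \<in> gp_words V" "d \<in> gp_words V"
  have 1: "(c@[(v,-a),(v,a)]@d, c@[(v,-a+a)]@d) \<in> gp_rel V ord E"
    by (rule step_R[OF gp_step.merge]) (use h in auto)
  have 2: "(c@[(v,0)]@d, c@[]@d) \<in> gp_rel V ord E"
    by (rule step_R[OF gp_step.zero]) (use h in auto)
  from 1 2 show ?thesis using R_trans by fastforce
qed

lemma invw_cancel: "xs \<in> gp_words V \<Longrightarrow> c \<in> gp_words V \<Longrightarrow> d \<in> gp_words V \<Longrightarrow>
   (c @ invw xs @ xs @ d, c @ d) \<in> gp_rel V ord E"
proof (induction xs arbitrary: d)
  case Nil then show ?case by (simp add: invw_def)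
next
  case (Cons x xs)
  obtain v a where x: "x = (v,a)" by (cases x)
  have e: "c @ invw (x#xs) @ (x#xs) @ d = (c @ invw xs) @ [(v,-a),(v,a)] @ (xs @ d)"
    by (simp add: invw_def x)
  have 1: "(c @ invw (x#xs) @ (x#xs) @ d, (c @ invw xs) @ (xs @ d)) \<in> gp_rel V ord E"
    unfolding e using Cons.prems x by (intro pair_cancel) (auto intro: invw_words)
  have 2: "(c @ invw xs @ xs @ d, c @ d) \<in> gp_rel V ord E"
    using Cons by auto
  from 1 2 show ?case using R_trans by fastforce
qed

lemma group_gp: "group (graph_product V ord E)"
proof (rule groupI)
  let ?G = "graph_product V ord E"
  fix x y z assume x: "x \<in> carrier ?G" and y: "y \<in> carrier ?G" and z: "z \<in> carrier ?G"
  from x obtain a where a: "a \<in> gp_words V" "x = gp_rel V ord E `` {a}" by (auto simp: carrier_gp)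
  from y obtain b where b: "b \<in> gp_words V" "y = gp_rel V ord E `` {b}" by (auto simp: carrier_gp)
  from z obtain c where c: "c \<in> gp_words V" "z = gp_rel V ord E `` {c}" by (auto simp: carrier_gp)
  show "x \<otimes>\<^bsub>?G\<^esub> y \<in> carrier ?G" using a b by (auto simp: mult_gp carrier_gp)
  show "x \<otimes>\<^bsub>?G\<^esub> y \<otimes>\<^bsub>?G\<^esub> z = x \<otimes>\<^bsub>?G\<^esub> (y \<otimes>\<^bsub>?G\<^esub> z)"
    using a b c by (simp add: mult_gp)
next
  let ?G = "graph_product V ord E"
  show "\<one>\<^bsub>?G\<^esub> \<in> carrier ?G" by (auto simp: one_gp carrier_gp)
next
  let ?G = "graph_product V ord E"
  fix x assume x: "x \<in> carrier ?G"
  from x obtain a where a: "a \<in> gp_words V" "x = gp_rel V ord E `` {a}" by (auto simp: carrier_gp)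
  show "\<one>\<^bsub>?G\<^esub> \<otimes>\<^bsub>?G\<^esub> x = x" using a by (simp add: one_gp mult_gp)
  have "invw a \<in> gp_words V" using a invw_words by blast
  moreover have "gp_rel V ord E `` {invw a} \<otimes>\<^bsub>?G\<^esub> x = \<one>\<^bsub>?G\<^esub>"
    using a calculation invw_cancel[of a V "[]" "[]" ord E]
    by (simp add: mult_gp one_gp class_eq)
  ultimately show "\<exists>y\<in>carrier ?G. y \<otimes>\<^bsub>?G\<^esub> x = \<one>\<^bsub>?G\<^esub>"
    by (intro bexI[of _ "gp_rel V ord E `` {invw a}"]) (auto simp: carrier_gp)
qed



fun csyl :: "('v \<times> int) \<Rightarrow> ('v \<times> int) list \<Rightarrow> ('v \<times> int) list" where
  "csyl (v,a) [] = (if a = 0 then [] else [(v,a)])"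
| "csyl (v,a) ((w,b)#L) = (if a = 0 then (w,b)#L else if w = v then (if a + b = 0 then L else (v,a+b)#L)
      else (v,a)#(w,b)#L)"

fun sred :: "('v \<times> int) list \<Rightarrow> bool" where
  "sred [] = True"
| "sred [(v,a)] = (a \<noteq> 0)"
| "sred ((v,a)#(w,b)#L) = (a \<noteq> 0 \<and> v \<noteq> w \<and> sred ((w,b)#L))"

lemma sred_tl: "sred (x#L) \<Longrightarrow> sred L"
  by (cases x; cases L) auto

lemma sred_Cons: "sred ((v,a)#L) \<longleftrightarrow> a \<noteq> 0 \<and> sred L \<and> (L = [] \<or> fst (hd L) \<noteq> v)"
  by (cases L) auto

lemma sred_csyl: "sred L \<Longrightarrow> sred (csyl x L)"
proof (cases x)
  case (Pair v a)
  assume s: "sred L"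
  show ?thesis
  proof (cases L)
    case Nil then show ?thesis using Pair by simp
  next
    case (Cons y L')
    obtain w b where y: "y = (w,b)" by (cases y)
    have s': "b \<noteq> 0" "sred L'" "L' = [] \<or> fst (hd L') \<noteq> w"
      using s unfolding Cons y sred_Cons by auto
    show ?thesis
      unfolding Pair Cons y csyl.simps
      using s s' unfolding Cons y by (auto simp: sred_Cons)
  qed
qed

lemma csyl_zero[simp]: "csyl (v,0) L = L"
  by (cases L) auto

lemma csyl_merge: "sred L \<Longrightarrow> csyl (v,a) (csyl (v,b) L) = csyl (v,a+b) L"
proof (cases "a = 0 \<or> b = 0")
  case True then show ?thesis by auto
next
  case ab: False
  assume s: "sred L"
  show ?thesis
  proof (cases L)
    case Nil then show ?thesis using ab by auto
  next
    case (Cons y L')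
    obtain w c where y: "y = (w,c)" by (cases y)
    have L'h: "L' = [] \<or> (\<exists>u d L''. L' = (u,d)#L'' \<and> u \<noteq> w)"
      using s Cons y by (cases L') auto
    have c0: "c \<noteq> 0" using s Cons y by (cases L') auto
    show ?thesis
    proof (cases "w = v")
      case False then show ?thesis using ab unfolding Cons y by simp
    next
      case wv: True
      show ?thesis
      proof (cases "b + c = 0")
        case True
        then have "a + b + c = a" by simp
        moreover have "csyl (v,a) L' = (v,a)#L'" using L'h wv ab by auto
        ultimately show ?thesis using ab True unfolding Cons y wv by simp
      next
        case False
        then show ?thesis using ab c0 unfolding Cons y wv by (simp add: add.assoc)
      qed
    qed
  qed
qed

definition Phi :: "'v set \<Rightarrow> ('v \<times> int) list \<Rightarrow> ('v \<times> int) list" where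
  "Phi N xs = foldr csyl (filter (\<lambda>x. fst x \<in> N) xs) []"

lemma sred_foldr: "sred L \<Longrightarrow> sred (foldr csyl xs L)"
  by (induction xs) (auto intro: sred_csyl)

lemma sred_Phi: "sred (Phi N xs)"
  unfolding Phi_def by (rule sred_foldr) simp

lemma Phi_append: "Phi N (xs @ ys) = foldr csyl (filter (\<lambda>x. fst x \<in> N) xs) (Phi N ys)"
  by (simp add: Phi_def)

lemma step_Phi:
  assumes "gp_step ord E l r" "\<forall>v\<in>N. ord v = 0" "\<forall>v\<in>N. \<forall>w\<in>N. {v,w} \<notin> E" "sred L"
  shows "foldr csyl (filter (\<lambda>x. fst x \<in> N) l) L = foldr csyl (filter (\<lambda>x. fst x \<in> N) r) L"
  using assms(1)
proof cases
  case (merge v a b) then show ?thesis using assms(4) by (simp add: csyl_merge)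
next
  case (zero v) then show ?thesis by simp
next
  case (order v) then show ?thesis using assms(2) by auto
next
  case (comm v w a b) then show ?thesis using assms(3) by auto
qed

lemma onestep_Phi:
  assumes "(x,y) \<in> gp_onestep V ord E" "\<forall>v\<in>N. ord v = 0" "\<forall>v\<in>N. \<forall>w\<in>N. {v,w} \<notin> E"
  shows "Phi N x = Phi N y"
proof -
  from assms(1) obtain xs l r ys where h: "x = xs@l@ys" "y = xs@r@ys" "gp_step ord E l r"
    unfolding gp_onestep_def by blast
  have "foldr csyl (filter (\<lambda>x. fst x \<in> N) l) (Phi N ys) = foldr csyl (filter (\<lambda>x. fst x \<in> N) r) (Phi N ys)"
    using step_Phi[OF h(3) assms(2,3) sred_Phi] .
  then show ?thesis unfolding h Phi_append[of N xs] Phi_append[of N l] Phi_append[of N r] by simp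
qed

lemma R_Phi:
  assumes "(x,y) \<in> gp_rel V ord E" "\<forall>v\<in>N. ord v = 0" "\<forall>v\<in>N. \<forall>w\<in>N. {v,w} \<notin> E"
  shows "Phi N x = Phi N y"
  using assms(1) unfolding gp_rel_def
proof (induction rule: rtrancl_induct)
  case base then show ?case by simp
next
  case (step y z)
  then show ?case using onestep_Phi[OF _ assms(2,3)] by auto
qed



lemma fr_tl: "freely_reduced (x#ws) \<Longrightarrow> freely_reduced ws"
  unfolding freely_reduced_def
proof (intro allI impI)
  fix i assume h: "\<forall>i. Suc i < length (x # ws) \<longrightarrow> \<not> (fst ((x # ws) ! i) = fst ((x # ws) ! Suc i) \<and> snd ((x # ws) ! i) \<noteq> snd ((x # ws) ! Suc i))"
    and i: "Suc i < length ws"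
  from h[rule_format, of "Suc i"] i
  show "\<not> (fst (ws ! i) = fst (ws ! Suc i) \<and> snd (ws ! i) \<noteq> snd (ws ! Suc i))" by simp
qed

lemma fr_head: "freely_reduced (x#y#ws) \<Longrightarrow> \<not> (fst x = fst y \<and> snd x \<noteq> snd y)"
  unfolding freely_reduced_def
proof -
  assume h: "\<forall>i. Suc i < length (x # y # ws) \<longrightarrow> \<not> (fst ((x # y # ws) ! i) = fst ((x # y # ws) ! Suc i) \<and> snd ((x # y # ws) ! i) \<noteq> snd ((x # y # ws) ! Suc i))"
  from h[rule_format, of 0] show ?thesis by simp
qed

lemma vertex_carrier: "v \<in> V \<Longrightarrow> vertex_elem V ord E v a \<in> carrier (graph_product V ord E)"
  unfolding vertex_elem_def carrier_gp by (intro bexI[of _ "[(v,a)]"]) auto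

lemma vertex_mult: "v \<in> V \<Longrightarrow> vertex_elem V ord E v a \<otimes>\<^bsub>graph_product V ord E\<^esub> vertex_elem V ord E v b
   = vertex_elem V ord E v (a+b)"
proof -
  assume v: "v \<in> V"
  have "([]@[(v,a),(v,b)]@[], []@[(v,a+b)]@[]) \<in> gp_rel V ord E"
    by (rule step_R[OF gp_step.merge]) (use v in auto)
  then show ?thesis unfolding vertex_elem_def using v
    by (simp add: mult_gp class_eq)
qed

lemma vertex_zero: "v \<in> V \<Longrightarrow> vertex_elem V ord E v 0 = \<one>\<^bsub>graph_product V ord E\<^esub>"
proof -
  assume v: "v \<in> V"
  have "([]@[(v,0)]@[], []@[]@[]) \<in> gp_rel V ord E"
    by (rule step_R[OF gp_step.zero]) (use v in auto)
  then show ?thesis unfolding vertex_elem_def one_gp using v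
    by (simp add: class_eq)
qed

lemma vertex_inv: "v \<in> V \<Longrightarrow> inv\<^bsub>graph_product V ord E\<^esub> (vertex_elem V ord E v a) = vertex_elem V ord E v (-a)"
proof -
  assume v: "v \<in> V"
  interpret group "graph_product V ord E" by (rule group_gp)
  show ?thesis
    by (rule inv_equality) (use v in \<open>simp_all add: vertex_mult vertex_zero vertex_carrier\<close>)
qed

lemma Phi_single: "v \<in> N \<Longrightarrow> Phi N ((v,a)#xs) = csyl (v,a) (Phi N xs)"
  by (simp add: Phi_def)

lemma free_W:
  assumes NV: "N \<subseteq> V" and ord0: "\<forall>v\<in>N. ord v = 0" and ind: "\<forall>v\<in>N. \<forall>w\<in>N. {v,w} \<notin> E"
    and n12: "n1 \<in> N" "n2 \<in> N" "n1 \<noteq> n2"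
  shows "free_of_rank_ge2 (graph_product V ord E) (W_sub V ord E N)"
proof -
  let ?G = "graph_product V ord E"
  let ?R = "gp_rel V ord E"
  let ?ve = "vertex_elem V ord E"
  interpret group ?G by (rule group_gp)
  define B where "B = {?ve v 1 | v. v \<in> N}"
  define S where "S = {?ve v a | v a. v \<in> N}"
  have inj: "v = w" if "v \<in> N" "w \<in> N" "?ve v 1 = ?ve w 1" for v w
  proof -
    have "([(v,1)],[(w,1)]) \<in> ?R" using that NV class_eq[of "[(v,1)]" V ord E "[(w,1)]"]
      unfolding vertex_elem_def by auto
    then have "Phi N [(v,1)] = Phi N [(w,1)]" using R_Phi ord0 ind by blast
    then show ?thesis using that by (simp add: Phi_def)
  qed
  have Bc: "B \<subseteq> carrier ?G" unfolding B_def using NV by (auto intro: vertex_carrier)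
  have pos: "?ve v (int k) \<in> generate ?G B" if "v \<in> N" for v k
  proof (induction k)
    case 0 then show ?case using vertex_zero that NV generate.one by (metis in_mono of_nat_0)
  next
    case (Suc k)
    have "?ve v 1 \<in> generate ?G B" using that unfolding B_def by (auto intro: generate.incl)
    then have "?ve v 1 \<otimes>\<^bsub>?G\<^esub> ?ve v (int k) \<in> generate ?G B" using Suc by (rule generate.eng)
    moreover have "v \<in> V" using that NV by auto
    ultimately show ?case using vertex_mult[of v V ord E 1 "int k"] by simp
  qed
  have allv: "?ve v a \<in> generate ?G B" if "v \<in> N" for v a
  proof (cases "a \<ge> 0")
    case True then show ?thesis using pos[OF that, of "nat a"] by simp
  next
    case False
    have "inv\<^bsub>?G\<^esub> (?ve v (int (nat (-a)))) \<in> generate ?G B"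
      using subgroup.m_inv_closed[OF generate_is_subgroup[OF Bc] pos[OF that]] .
    moreover have "v \<in> V" using that NV by auto
    ultimately show ?thesis using vertex_inv[of v V ord E "- a"] False by simp
  qed
  have gen: "generate ?G B = W_sub V ord E N"
  proof
    show "generate ?G B \<subseteq> W_sub V ord E N" unfolding W_sub_def
      by (rule mono_generate) (auto simp: B_def)
    show "W_sub V ord E N \<subseteq> generate ?G B" unfolding W_sub_def
      by (rule generate_subgroup_incl[OF _ generate_is_subgroup[OF Bc]]) (auto intro: allv)
  qed
  have BH: "B \<subseteq> W_sub V ord E N"
  proof
    fix b assume "b \<in> B"
    then have "b \<in> generate ?G B" by (rule generate.incl)
    then show "b \<in> W_sub V ord E N" using gen by simp
  qed
  define vof where "vof b = (SOME v. v \<in> N \<and> b = ?ve v 1)" for b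
  have vof: "vof b \<in> N \<and> b = ?ve (vof b) 1" if "b \<in> B" for b
    unfolding vof_def by (rule someI_ex) (use that B_def in auto)
  define letter where "letter x = (vof (fst x), if snd x then 1 else (-1::int))" for x :: "_ \<times> bool"
  have wp: "word_prod ?G ws = ?R `` {map letter ws} \<and> map letter ws \<in> gp_words V"
    if "set (map fst ws) \<subseteq> B" for ws
    using that
  proof (induction ws)
    case Nil then show ?case by (simp add: word_prod_def one_gp)
  next
    case (Cons x ws)
    obtain b e where x: "x = (b,e)" by (cases x)
    have b: "b \<in> B" using Cons.prems x by auto
    have vN: "vof b \<in> V" using vof[OF b] NV by auto
    have IH: "word_prod ?G ws = ?R `` {map letter ws}" "map letter ws \<in> gp_words V"
      using Cons by auto
    have "(if e then b else inv\<^bsub>?G\<^esub> b) = ?ve (vof b) (if e then 1 else -1)"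
      using vof[OF b] vertex_inv[OF vN, of ord E 1] by (cases e) auto
    then have "(if e then b else inv\<^bsub>?G\<^esub> b) = ?R `` {[letter x]}"
      unfolding letter_def x vertex_elem_def by simp
    then have "word_prod ?G (x#ws) = ?R `` {[letter x]} \<otimes>\<^bsub>?G\<^esub> ?R `` {map letter ws}"
      using IH unfolding word_prod_def x by simp
    have lx: "[letter x] \<in> gp_words V" using vN x by (simp add: letter_def)
    have "?R `` {[letter x]} \<otimes>\<^bsub>?G\<^esub> ?R `` {map letter ws} = ?R `` {[letter x] @ map letter ws}"
      by (rule mult_gp[OF lx IH(2)])
    also have "\<dots> = ?R `` {map letter (x#ws)}" by simp
    finally show ?case using IH lx \<open>word_prod ?G (x#ws) = _\<close> by simp
  qed
  have ne: "\<exists>c L. Phi N (map letter ws) = (vof (fst (hd ws)), c) # L \<and> (if snd (hd ws) then c > 0 else c < 0)"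
    if "ws \<noteq> []" "set (map fst ws) \<subseteq> B" "freely_reduced ws" for ws
    using that
  proof (induction ws)
    case Nil then show ?case by simp
  next
    case (Cons x ws)
    have b: "fst x \<in> B" using Cons.prems by auto
    have vN: "vof (fst x) \<in> N" using vof[OF b] by auto
    have P: "Phi N (map letter (x#ws)) = csyl (vof (fst x), if snd x then 1 else -1) (Phi N (map letter ws))"
      using vN by (simp add: letter_def Phi_def)
    have pr: "set (map fst ws) \<subseteq> B" "freely_reduced ws"
      using Cons.prems fr_tl[of x ws] by auto
    note IH = Cons.IH
    show ?case
    proof (cases "ws = []")
      case True then show ?thesis unfolding P by (simp add: Phi_def)
    next
      case False
      then obtain y ws' where yws: "ws = y#ws'" by (cases ws) auto
      have y: "fst y \<in> B" using pr yws by auto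
      from IH[OF False pr] obtain c L where cL: "Phi N (map letter ws) = (vof (fst y), c) # L"
          "if snd y then c > 0 else c < 0"
        unfolding yws by auto
      show ?thesis
      proof (cases "vof (fst x) = vof (fst y)")
        case False then show ?thesis unfolding list.sel(1) P cL(1) by auto
      next
        case True
        then have "fst x = fst y" using vof[OF b] vof[OF y] by metis
        moreover have "freely_reduced (x#y#ws')" using Cons.prems yws by simp
        ultimately have "snd x = snd y" using fr_head by blast
        then show ?thesis unfolding list.sel(1) P cL(1) using cL(2) True[symmetric] by (cases "snd x") auto
      qed
    qed
  qed
  have free: "word_prod ?G ws \<noteq> \<one>\<^bsub>?G\<^esub>"
    if "ws \<noteq> []" "set (map fst ws) \<subseteq> B" "freely_reduced ws" for ws
  proof
    assume eq: "word_prod ?G ws = \<one>\<^bsub>?G\<^esub>"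
    have "(map letter ws, []) \<in> ?R" using wp[OF that(2)] eq unfolding one_gp
      using class_eq by blast
    then have "Phi N (map letter ws) = Phi N []" using R_Phi ord0 ind by blast
    then show False using ne[OF that] by (auto simp: Phi_def)
  qed
  have fb: "free_basis ?G (W_sub V ord E N) B"
    unfolding free_basis_def using BH gen free by blast
  have e12: "?ve n1 1 \<in> B" "?ve n2 1 \<in> B" "?ve n1 1 \<noteq> ?ve n2 1"
    using n12 inj unfolding B_def by auto
  have "infinite B \<or> card B \<ge> 2"
  proof (cases "finite B")
    case True
    have "card {?ve n1 1, ?ve n2 1} \<le> card B" using True e12 by (intro card_mono) auto
    then show ?thesis using e12 by simp
  qed simp
  then show ?thesis unfolding free_of_rank_ge2_def using fb by blast
qed



lemma no_loop: "simple_graph V E \<Longrightarrow> {v,v} \<notin> E"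
  unfolding simple_graph_def by force

lemma lk_sym: "x \<in> lk E v \<longleftrightarrow> v \<in> lk E x"
  unfolding lk_def by (simp add: insert_commute)

lemma st_sym: "x \<in> st E v \<longleftrightarrow> v \<in> st E x"
  unfolding st_def using lk_sym[of x E v] by auto

lemma pp_pos: "Factorial_Ring.prime (p::nat) \<Longrightarrow> p ^ k \<noteq> 0"
  by (simp add: prime_gt_0_nat)

lemma tau_equiv_cases:
  assumes G: "simple_graph V E" and eq: "tau_equiv ord E v w" and vw: "v \<noteq> w"
  shows "st E v = st E w \<or> (ord v = 0 \<and> ord w = 0 \<and> {v,w} \<notin> E \<and> lk E v = lk E w)"
proof -
  have l1: "(ord v = 0 \<and> lk E v \<subseteq> st E w) \<or> (ord v \<noteq> 0 \<and> ord w \<noteq> 0 \<and> st E v \<subseteq> st E w)"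
    using eq vw unfolding tau_equiv_def tau_le_def by (auto dest: pp_pos)
  have l2: "(ord w = 0 \<and> lk E w \<subseteq> st E v) \<or> (ord w \<noteq> 0 \<and> ord v \<noteq> 0 \<and> st E w \<subseteq> st E v)"
    using eq vw unfolding tau_equiv_def tau_le_def by (auto dest: pp_pos)
  have nv: "v \<notin> lk E v" "w \<notin> lk E w" using no_loop[OF G] unfolding lk_def by auto
  show ?thesis
  proof (cases "ord v = 0")
    case False then show ?thesis using l1 l2 by auto
  next
    case True
    then have a: "ord v = 0" "lk E v \<subseteq> st E w" "ord w = 0" "lk E w \<subseteq> st E v" using l1 l2 by auto
    show ?thesis
    proof (cases "{v,w} \<in> E")
      case True
      then have "w \<in> lk E v" "v \<in> lk E w" unfolding lk_def by (auto simp: insert_commute)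
      then have "st E v = st E w" using a(2,4) unfolding st_def by auto
      then show ?thesis by simp
    next
      case False
      then have "w \<notin> lk E v" "v \<notin> lk E w" unfolding lk_def by (auto simp: insert_commute)
      then have "lk E v = lk E w" using a(2,4) vw unfolding st_def by auto
      then show ?thesis using a False by simp
    qed
  qed
qed

theorem lemma6p9:
  fixes V :: "'v set" and E :: "'v set set" and ord :: "'v \<Rightarrow> nat" and M N :: "'v set"
  assumes "simple_graph V E"
    and "\<forall>v\<in>V. ord v = 0 \<or> primary_order (ord v)"
    and "tau_class V ord E M" and "tau_class V ord E N"
    and "\<not> free_of_rank_ge2 (graph_product V ord E) (W_sub V ord E N)"
    and "N \<inter> L_set V E M \<noteq> {}"
  shows "N \<subseteq> L_set V E M"
proof -
  note G = assms(1)
  from assms(4) obtain v0 where v0: "v0 \<in> V" "N = {w\<in>V. tau_equiv ord E v0 w}"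
    unfolding tau_class_def by blast
  have NV: "N \<subseteq> V" using v0 by auto
  have v0N: "v0 \<in> N" using v0 unfolding tau_equiv_def tau_le_def by auto
  from assms(6) obtain n where n: "n \<in> N" "n \<in> L_set V E M" by blast
  have ce: "st E v0 = st E y \<or> (ord v0 = 0 \<and> ord y = 0 \<and> {v0,y} \<notin> E \<and> lk E v0 = lk E y)"
    if "y \<in> N" for y
  proof (cases "y = v0")
    case True then show ?thesis by simp
  next
    case False then show ?thesis using tau_equiv_cases[OF G] that v0 by auto
  qed
  show ?thesis
  proof (cases "\<forall>y\<in>N. st E y = st E v0")
    case True
    show ?thesis
    proof
      fix m assume m: "m \<in> N"
      have "m \<notin> st E w" if w: "w \<in> M" for w
      proof
        assume "m \<in> st E w"
        then have "w \<in> st E m" using st_sym by metis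
        then have "w \<in> st E n" using True m n(1) by auto
        then have "n \<in> st E w" using st_sym by metis
        then show False using n(2) w unfolding L_set_def by auto
      qed
      then show "m \<in> L_set V E M" using m NV unfolding L_set_def by auto
    qed
  next
    case False
    then obtain x where x: "x \<in> N" "st E x \<noteq> st E v0" by blast
    then have xv: "ord v0 = 0" "ord x = 0" "{v0,x} \<notin> E" "lk E v0 = lk E x" using ce by metis+
    have nl: "z \<notin> lk E z" for z using no_loop[OF G] unfolding lk_def by auto
    have xne: "x \<noteq> v0" using x by auto
    have yprop: "ord y = 0 \<and> {v0,y} \<notin> E \<and> lk E y = lk E v0" if y: "y \<in> N" for y
    proof (cases "st E v0 = st E y")
      case False then show ?thesis using ce[OF y] by auto
    next
      case True
      show ?thesis
      proof (cases "y = v0")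
        case True then show ?thesis using xv no_loop[OF G] by auto
      next
        case yne: False
        have "y \<in> st E v0" using True unfolding st_def by auto
        then have "y \<in> lk E v0" using yne unfolding st_def by auto
        then have "y \<in> lk E x" using xv by auto
        then have "x \<in> lk E y" using lk_sym by metis
        then have "x \<in> st E v0" using True unfolding st_def by auto
        then have "x \<in> lk E v0" using xne unfolding st_def by auto
        then have "{v0,x} \<in> E" unfolding lk_def by auto
        then show ?thesis using xv by auto
      qed
    qed
    have ord0: "\<forall>v\<in>N. ord v = 0" using yprop by auto
    have ind: "\<forall>v\<in>N. \<forall>w\<in>N. {v,w} \<notin> E"
    proof (intro ballI)
      fix y z assume y: "y \<in> N" and z: "z \<in> N"
      show "{y,z} \<notin> E"
      proof
        assume "{y,z} \<in> E"
        then have "z \<in> lk E y" unfolding lk_def by auto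
        then have "z \<in> lk E v0" using yprop[OF y] by auto
        then have "{v0,z} \<in> E" unfolding lk_def by auto
        then show False using yprop[OF z] by auto
      qed
    qed
    have "free_of_rank_ge2 (graph_product V ord E) (W_sub V ord E N)"
      by (rule free_W[OF NV ord0 ind v0N x(1) xne[symmetric]])
    then show ?thesis using assms(5) by contradiction
  qed
qed

end
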